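(* Let $\mathfrak S$ be a controlled Markov process and $\mathcal G$ its induced abstract $2\frac12$-player game graph (as described in the context). Let $v\in V_0$, $U\subseteq V_0$, and let $\pi_0$ be a deterministic memoryless strategy of Player 0 such that $\inf_{\pi_1}P_v^{\pi_0,\pi_1}(\mathcal G\models\lozenge U)=1$, the infimum over all Player 1 strategies $\pi_1$. Then the refinement $\rho$ of $\pi_0$ ensures $P_s^{\rho}(\mathfrak S\models\lozenge Q^{-1}(U))=1$ for every state $s\in v$.
   Context: CMP: $\mathfrak S=(\mathcal S,\mathcal U,T_{\mathfrak s})$ with $\mathcal S$ a Borel space, $\mathcal U$ finite, and $T_{\mathfrak s}(\cdot\mid s,u)$ a probability measure on the Borel sets of $\mathcal S$. A stationary policy is a universally measurable $\rho:\mathcal S\to\mathcal U$; $P_s^\rho$ is the induced measure on infinite paths from $s$ with $s^{k+1}\sim T_{\mathfrak s}(\cdot\mid s^k,\rho(s^k))$; $(\mathfrak S\models\lozenge A)$ is the set of paths visiting $A$. $\mathcal P=\langle B_1,\dots,B_\ell\rangle$ is a given measurable partition of $\mathcal S$. Abstraction: $\widehat{\mathcal S}$ is a finite partition of $\mathcal S$ into nonempty (measurable) cells each contained in a single $B_i$. $Q:\mathcal S\to\widehat{\mathcal S}$ maps $s$ to its cell; $Q^{-1}(\widehat U)=\bigcup_{\widehat s\in\widehat U}\widehat s$. Functions $\overline F,\underline F:\widehat{\mathcal S}\times\mathcal U\to2^{\widehat{\mathcal S}}$ satisfy $\overline F(\widehat s,u)\supseteq\{\widehat s'\mid\exists s\in\widehat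 s.\ T_{\mathfrak s}(\widehat s'\mid s,u)>0\}$ and $\underline F(\widehat s,u)\subseteq\{\widehat s'\mid\exists\varepsilon>0\ \forall s\in\widehat s.\ T_{\mathfrak s}(\widehat s'\mid s,u)\ge\varepsilon\}$. Game graph $\mathcal G=\langle V,E,\langle V_0,V_1,V_r\rangle\rangle$: $V_0=\widehat{\mathcal S}$, $V_1=\widehat{\mathcal S}\times\mathcal U$, $V_r=\bigcup_{v_1\in V_1}V_r(v_1)$ with $V_r(v_1)=\{v_r\subseteq\widehat{\mathcal S}\mid\underline F(v_1)\subseteq v_r\subseteq\overline F(v_1),\ 1\le|v_r|\le|\underline F(v_1)|+1\}$; $E(v_0)=\{(v_0,u)\mid u\in\mathcal U\}$, $E(v_1)=V_r(v_1)$, $E(v_r)=\{v_0\in V_0\mid v_0\in v_r\}$. Player 0 moves at $V_0$, Player 1 at $V_1$, uniformly random successor at $V_r$. Strategies $\pi_i:V^*V_i\to\mathit{Dist}(V)$ are supported on successors; a deterministic memoryless Player 0 strategy assigns each $v_0$ a single successor $\pi_0(v_0)=(v_0,u)$. $P_v^{\pi_0,\pi_1}$ is the induced measure on runs. A run of $\mathcal G$ satisfies a specification over $V_0$ (such as $\lozenge U$) iff its projection onto its subsequence of $V_0$-vertices does. Refinement: the refinement of a deterministic memoryless $\pi_0$ is $\rho$ with $\rho(s)=u$ whenever $s\in\widehat s$ and $\pi_0(\widehat s)=(\widehat s,u)$. *)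

theory Defs
  imports "HOL-Probability.Probability"
begin

text \<open>Cylinder probabilities: given history h (nonempty, current state last h),
  the probability that the next states lie successively in the sets As.\<close>
fun hist_cyl :: "('x list \<Rightarrow> 'x measure) \<Rightarrow> 'x list \<Rightarrow> 'x set list \<Rightarrow> ennreal" where
  "hist_cyl K h [] = 1"
| "hist_cyl K h (A # As) = (\<integral>\<^sup>+ x. indicator A x * hist_cyl K (h @ [x]) As \<partial>K h)"

fun path_cyl :: "('x list \<Rightarrow> 'x measure) \<Rightarrow> 'x \<Rightarrow> 'x set list \<Rightarrow> ennreal" where
  "path_cyl K x0 [] = 1"
| "path_cyl K x0 (A # As) = indicator A x0 * hist_cyl K [x0] As"

text \<open>P is the (unique) probability measure on infinite paths starting in x0 whose
  finite-dimensional distributions are those of the process x^{k+1} ~ K (x^0...x^k).\<close>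
definition is_path_measure ::
  "'x measure \<Rightarrow> ('x list \<Rightarrow> 'x measure) \<Rightarrow> 'x \<Rightarrow> 'x stream measure \<Rightarrow> bool" where
  "is_path_measure M K x0 P \<longleftrightarrow>
     prob_space P \<and> sets P = sets (stream_space M) \<and>
     (\<forall>As. set As \<subseteq> sets M \<longrightarrow>
        emeasure P {\<omega> \<in> space P. \<forall>i<length As. \<omega> !! i \<in> As ! i} = path_cyl K x0 As)"

text \<open>CMP (S,U,T): S a Borel space (type of class polish_space with its Borel sigma
  algebra), U a finite type, T a stochastic kernel.\<close>
definition is_cmp :: "('a::polish_space \<Rightarrow> 'u::finite \<Rightarrow> 'a measure) \<Rightarrow> bool" where
  "is_cmp T \<longleftrightarrow> (\<forall>u. (\<lambda>s. T s u) \<in> borel \<rightarrow>\<^sub>M prob_algebra borel)"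

definition cmp_path_measure ::
  "('a::polish_space \<Rightarrow> 'u \<Rightarrow> 'a measure) \<Rightarrow> ('a \<Rightarrow> 'u) \<Rightarrow> 'a \<Rightarrow> 'a stream measure \<Rightarrow> bool" where
  "cmp_path_measure T \<rho> s P \<longleftrightarrow> is_path_measure borel (\<lambda>h. T (last h) (\<rho> (last h))) s P"

definition measurable_partition :: "'a::topological_space set set \<Rightarrow> bool" where
  "measurable_partition C \<longleftrightarrow> finite C \<and> disjoint C \<and> \<Union>C = UNIV \<and> C \<subseteq> sets borel"

definition is_abstraction :: "'a::topological_space set set \<Rightarrow> 'a set set \<Rightarrow> bool" where
  "is_abstraction Bs C \<longleftrightarrow> measurable_partition C \<and> {} \<notin> C \<and> (\<forall>c\<in>C. \<exists>B\<in>Bs. c \<subseteq> B)"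

definition cell_of :: "'a set set \<Rightarrow> 'a \<Rightarrow> 'a set" where
  "cell_of C s = (THE c. c \<in> C \<and> s \<in> c)"

definition Qinv :: "'a set set \<Rightarrow> 'a set" where
  "Qinv U = \<Union>U"

definition F_over_ok ::
  "('a \<Rightarrow> 'u \<Rightarrow> 'a measure) \<Rightarrow> 'a set set \<Rightarrow> ('a set \<Rightarrow> 'u \<Rightarrow> 'a set set) \<Rightarrow> bool" where
  "F_over_ok T C Fo \<longleftrightarrow> (\<forall>c\<in>C. \<forall>u. Fo c u \<subseteq> C \<and>
      {c' \<in> C. \<exists>s\<in>c. measure (T s u) c' > 0} \<subseteq> Fo c u)"

definition F_under_ok ::
  "('a \<Rightarrow> 'u \<Rightarrow> 'a measure) \<Rightarrow> 'a set set \<Rightarrow> ('a set \<Rightarrow> 'u \<Rightarrow> 'a set set) \<Rightarrow> bool" where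
  "F_under_ok T C Fu \<longleftrightarrow> (\<forall>c\<in>C. \<forall>u.
      Fu c u \<subseteq> {c' \<in> C. \<exists>\<epsilon>>0. \<forall>s\<in>c. measure (T s u) c' \<ge> \<epsilon>})"

datatype ('a, 'u) gvtx = GV0 "'a set" | GV1 "'a set" 'u | GVr "'a set set"

definition Vr_of :: "'a set set \<Rightarrow> ('a set \<Rightarrow> 'u \<Rightarrow> 'a set set) \<Rightarrow> ('a set \<Rightarrow> 'u \<Rightarrow> 'a set set)
    \<Rightarrow> 'a set \<Rightarrow> 'u \<Rightarrow> 'a set set set" where
  "Vr_of C Fo Fu c u = {r. r \<subseteq> C \<and> Fu c u \<subseteq> r \<and> r \<subseteq> Fo c u \<and> 1 \<le> card r \<and> card r \<le> card (Fu c u) + 1}"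

fun game_edges :: "'a set set \<Rightarrow> ('a set \<Rightarrow> 'u \<Rightarrow> 'a set set) \<Rightarrow> ('a set \<Rightarrow> 'u \<Rightarrow> 'a set set)
    \<Rightarrow> ('a, 'u) gvtx \<Rightarrow> ('a, 'u) gvtx set" where
  "game_edges C Fo Fu (GV0 c) = {GV1 c u | u. True}"
| "game_edges C Fo Fu (GV1 c u) = GVr ` Vr_of C Fo Fu c u"
| "game_edges C Fo Fu (GVr r) = GV0 ` r"

definition p1_strategy :: "'a set set \<Rightarrow> ('a set \<Rightarrow> 'u \<Rightarrow> 'a set set) \<Rightarrow> ('a set \<Rightarrow> 'u \<Rightarrow> 'a set set)
    \<Rightarrow> (('a, 'u) gvtx list \<Rightarrow> ('a, 'u) gvtx pmf) \<Rightarrow> bool" where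
  "p1_strategy C Fo Fu \<pi>1 \<longleftrightarrow> (\<forall>h c u. h \<noteq> [] \<longrightarrow> last h = GV1 c u \<longrightarrow> c \<in> C \<longrightarrow>
      set_pmf (\<pi>1 h) \<subseteq> game_edges C Fo Fu (GV1 c u))"

text \<open>One step of the game: Player 0 plays the deterministic memoryless strategy
  sigma (pi_0(c) = (c, sigma c)), Player 1 plays pi1, random vertices are uniform.\<close>
fun game_step :: "('a set \<Rightarrow> 'u) \<Rightarrow> (('a, 'u) gvtx list \<Rightarrow> ('a, 'u) gvtx pmf)
    \<Rightarrow> ('a, 'u) gvtx list \<Rightarrow> ('a, 'u) gvtx pmf" where
  "game_step \<sigma> \<pi>1 h = (case last h of
       GV0 c \<Rightarrow> return_pmf (GV1 c (\<sigma> c))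
     | GV1 c u \<Rightarrow> \<pi>1 h
     | GVr r \<Rightarrow> pmf_of_set (GV0 ` r))"

definition game_measure :: "('a set \<Rightarrow> 'u) \<Rightarrow> (('a, 'u) gvtx list \<Rightarrow> ('a, 'u) gvtx pmf)
    \<Rightarrow> 'a set \<Rightarrow> ('a, 'u) gvtx stream measure \<Rightarrow> bool" where
  "game_measure \<sigma> \<pi>1 v P \<longleftrightarrow>
     is_path_measure (count_space UNIV) (\<lambda>h. measure_pmf (game_step \<sigma> \<pi>1 h)) (GV0 v) P"

definition refinement :: "'a set set \<Rightarrow> ('a set \<Rightarrow> 'u) \<Rightarrow> 'a \<Rightarrow> 'u" where
  "refinement C \<sigma> s = \<sigma> (cell_of C s)"

end

theory Submission
  imports Defs
begin


locale mk =
  fixes K :: "'x list \<Rightarrow> 'x measure" and \<kappa> :: "'x \<Rightarrow> 'x measure"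
  assumes K: "\<And>h. K h = \<kappa> (last h)" and kprob: "\<And>x. prob_space (\<kappa> x)"
begin

lemma hist_cyl_markov:
  shows "hist_cyl K h As = (\<integral>\<^sup>+y. path_cyl K y As \<partial>\<kappa> (last h))"
proof (induction As arbitrary: h)
  case Nil
  then show ?case using prob_space.emeasure_space_1[OF kprob] by (simp add: nn_integral_const)
next
  case (Cons A As)
  have "hist_cyl K h (A#As) = (\<integral>\<^sup>+ y. indicator A y * hist_cyl K (h@[y]) As \<partial>\<kappa> (last h))"
    by (simp add: K)
  also have "\<dots> = (\<integral>\<^sup>+y. path_cyl K y (A#As) \<partial>\<kappa> (last h))"
    by (intro nn_integral_cong) (simp add: Cons.IH[of "_ @ [_]"] Cons.IH[of "[_]"])
  finally show ?case .
qed

lemma path_cyl_Cons_markov: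
  shows "path_cyl K x (A # As) = indicator A x * (\<integral>\<^sup>+y. path_cyl K y As \<partial>\<kappa> x)"
  using hist_cyl_markov[ of "[x]"] by simp

lemma pc_le_1:
  shows "path_cyl K x (replicate m B) \<le> 1"
proof (induction m arbitrary: x)
  case 0 then show ?case by simp
next
  case (Suc m)
  have "(\<integral>\<^sup>+y. path_cyl K y (replicate m B) \<partial>\<kappa> x) \<le> (\<integral>\<^sup>+y. 1 \<partial>\<kappa> x)"
    by (intro nn_integral_mono Suc.IH)
  also have "\<dots> = 1" using prob_space.emeasure_space_1[OF kprob] by (simp add: nn_integral_const)
  finally have "(\<integral>\<^sup>+y. path_cyl K y (replicate m B) \<partial>\<kappa> x) \<le> 1" .
  then show ?case
    by (simp only: replicate_Suc path_cyl_Cons_markov) (simp add: indicator_def)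
qed

lemma pc_mono_Suc:
  shows "path_cyl K x (replicate (Suc m) B) \<le> path_cyl K x (replicate m B)"
proof (induction m arbitrary: x)
  case 0
  show ?case using pc_le_1[ of _ "Suc 0" B] by (simp add: indicator_def)
next
  case (Suc m)
  have "(\<integral>\<^sup>+y. path_cyl K y (replicate (Suc m) B) \<partial>\<kappa> x) \<le> (\<integral>\<^sup>+y. path_cyl K y (replicate m B) \<partial>\<kappa> x)"
    by (intro nn_integral_mono Suc.IH)
  then show ?case
    by (simp only: replicate_Suc path_cyl_Cons_markov) (intro mult_left_mono, auto)
qed

lemma pc_mono:
  shows "m \<le> m' \<Longrightarrow> path_cyl K x (replicate m' B) \<le> path_cyl K x (replicate m B)"
proof (induction m' rule: dec_induct)
  case base then show ?case by simp
next
  case (step n) then show ?case using pc_mono_Suc[ of x n B] by simp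
qed

end

lemma path_measure_cyl_rep:
  assumes "is_path_measure M K x0 P" "B \<in> sets M"
  shows "emeasure P {\<omega>\<in>space P. \<forall>i<m. \<omega>!!i \<in> B} = path_cyl K x0 (replicate m B)"
  using assms unfolding is_path_measure_def
  by (auto dest!: spec[of _ "replicate m B"])



lemma cyl_sets:
  assumes "B \<in> sets M"
  shows "{\<omega>\<in>space (stream_space M). \<forall>i<m. \<omega>!!i \<in> B} \<in> sets (stream_space M)"
    "{\<omega>\<in>space (stream_space M). \<forall>i. \<omega>!!i \<in> B} \<in> sets (stream_space M)"
  using assms by measurable


lemma reach_one:
  assumes PM: "is_path_measure M K x0 P" and SM: "space M = UNIV" and A: "A \<in> sets M"
    and small: "\<And>d. d > 0 \<Longrightarrow> \<exists>m. path_cyl K x0 (replicate m (-A)) \<le> ennreal d"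
  shows "emeasure P {\<omega>\<in>space P. \<exists>i. \<omega>!!i \<in> A} = 1"
proof -
  have ps: "prob_space P" using PM unfolding is_path_measure_def by blast
  have sP: "sets P = sets (stream_space M)" using PM unfolding is_path_measure_def by blast
  interpret prob_space P by (fact ps)
  have spP: "space P = space (stream_space M)" using sP by (rule sets_eq_imp_space_eq)
  have cA: "-A \<in> sets M" using sets.compl_sets[OF A] SM by (simp add: Compl_eq_Diff_UNIV)
  define N where "N = {\<omega>\<in>space P. \<forall>i. \<omega>!!i \<in> -A}"
  have Ns: "N \<in> sets P" unfolding N_def sP spP by (rule cyl_sets(2)[OF cA])
  have "emeasure P N \<le> 0"
  proof (rule ennreal_le_epsilon)
    fix e :: real assume "0 < e"
    then obtain m where m: "path_cyl K x0 (replicate m (-A)) \<le> ennreal e" using small by blast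
    have sub: "N \<subseteq> {\<omega>\<in>space P. \<forall>i<m. \<omega>!!i \<in> -A}" unfolding N_def by blast
    have "{\<omega>\<in>space P. \<forall>i<m. \<omega>!!i \<in> -A} \<in> sets P" using cyl_sets(1)[OF cA, of m] unfolding sP spP .
    then have "emeasure P N \<le> emeasure P {\<omega>\<in>space P. \<forall>i<m. \<omega>!!i \<in> -A}"
      by (rule emeasure_mono[OF sub])
    also have "\<dots> = path_cyl K x0 (replicate m (-A))" by (rule path_measure_cyl_rep[OF PM cA])
    finally show "emeasure P N \<le> 0 + ennreal e" using m by simp
  qed
  then have N0: "emeasure P N = 0" by simp
  have "{\<omega>\<in>space P. \<exists>i. \<omega>!!i \<in> A} = space P - N" unfolding N_def by blast
  then show ?thesis using emeasure_compl[OF Ns] N0 by (simp add: emeasure_space_1)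
qed

lemma reach_not_one:
  assumes PM: "is_path_measure M K x0 P" and SM: "space M = UNIV" and A: "A \<in> sets M"
    and d: "d > 0" and big: "\<And>m. ennreal d \<le> path_cyl K x0 (replicate m (-A))"
  shows "emeasure P {\<omega>\<in>space P. \<exists>i. \<omega>!!i \<in> A} \<noteq> 1"
proof -
  have ps: "prob_space P" using PM unfolding is_path_measure_def by blast
  have sP: "sets P = sets (stream_space M)" using PM unfolding is_path_measure_def by blast
  interpret prob_space P by (fact ps)
  have spP: "space P = space (stream_space M)" using sP by (rule sets_eq_imp_space_eq)
  have cA: "-A \<in> sets M" using sets.compl_sets[OF A] SM by (simp add: Compl_eq_Diff_UNIV)
  define N where "N = {\<omega>\<in>space P. \<forall>i. \<omega>!!i \<in> -A}"
  define Cy where "Cy m = {\<omega>\<in>space P. \<forall>i<m. \<omega>!!i \<in> -A}" for m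
  have Ns: "N \<in> sets P" unfolding N_def sP spP by (rule cyl_sets(2)[OF cA])
  have Cys: "Cy m \<in> sets P" for m unfolding Cy_def sP spP by (rule cyl_sets(1)[OF cA])
  have dec: "decseq Cy" unfolding decseq_def Cy_def by auto
  have NI: "N = (\<Inter>m. Cy m)" unfolding N_def Cy_def apply (rule set_eqI) apply (rule iffI) apply blast using lessI by blast
  have "(INF m. emeasure P (Cy m)) = emeasure P N"
    unfolding NI by (rule INF_emeasure_decseq[OF _ dec]) (use Cys in auto)
  moreover have "ennreal d \<le> (INF m. emeasure P (Cy m))"
    unfolding Cy_def using big path_measure_cyl_rep[OF PM cA] by (auto intro!: INF_greatest)
  ultimately have "ennreal d \<le> emeasure P N" by simp
  then have "d \<le> measure P N" by (simp add: emeasure_eq_measure)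
  moreover have "{\<omega>\<in>space P. \<exists>i. \<omega>!!i \<in> A} = space P - N" unfolding N_def by blast
  ultimately have "measure P {\<omega>\<in>space P. \<exists>i. \<omega>!!i \<in> A} \<le> 1 - d"
    using prob_compl[OF Ns] by simp
  then show ?thesis using d by (simp add: emeasure_eq_measure)
qed



definition prun :: "('x \<Rightarrow> 'n \<Rightarrow> 'x) \<Rightarrow> 'x \<Rightarrow> 'n stream \<Rightarrow> 'x stream" where
  "prun F x \<xi> = smap fst (siterate (\<lambda>(y, \<eta>). (F y (shd \<eta>), stl \<eta>)) (x, \<xi>))"

lemma prun_code: "prun F x \<xi> = x ## prun F (F x (shd \<xi>)) (stl \<xi>)"
  unfolding prun_def by (subst siterate.code) simp

lemma prun_Stream: "prun F x (t ## \<xi>) = x ## prun F (F x t) \<xi>"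
  by (subst prun_code) simp

lemma prun_snth0: "prun F x \<xi> !! 0 = x"
  by (subst prun_code) simp

lemma prun_snthSuc: "prun F x \<xi> !! Suc n = prun F (F x (shd \<xi>)) (stl \<xi>) !! n"
  by (subst prun_code) simp

lemma cyl_Cons_iff: "(\<forall>i<length (A#As). (x ## w)!!i \<in> (A#As)!i) \<longleftrightarrow> x \<in> A \<and> (\<forall>i<length As. w!!i \<in> As!i)"
  by (simp add: All_less_Suc2)

lemma exists_path_measure:
  fixes \<kappa>p :: "'x \<Rightarrow> 'x pmf"
  assumes S: "finite S" "x0 \<in> S" "\<And>x. x \<in> S \<Longrightarrow> set_pmf (\<kappa>p x) \<subseteq> S"
  shows "\<exists>P. is_path_measure (count_space UNIV) (\<lambda>h. measure_pmf (\<kappa>p (last h))) x0 P"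
proof -
  define N where "N = Pi_pmf S x0 \<kappa>p"
  define F where "F x g = (if g x \<in> S then g x else x0)" for x and g :: "'x \<Rightarrow> 'x"
  define SS where "SS = stream_space (measure_pmf N)"
  define SC where "SC = stream_space (count_space (UNIV::'x set))"
  define K where "K = (\<lambda>h. measure_pmf (\<kappa>p (last h)))"
  interpret mk K "\<lambda>x. measure_pmf (\<kappa>p x)"
    by unfold_locales (simp_all add: K_def prob_space_measure_pmf)
  have FS: "F x g \<in> S" for x g using S(2) by (simp add: F_def)
  have meas_n: "(\<lambda>\<xi>. prun F x \<xi> !! n) \<in> measurable SS (count_space UNIV)" for n x
  proof (induction n arbitrary: x)
    case 0 show ?case unfolding prun_snth0 by simp
  next
    case (Suc n)
    have "(\<lambda>\<xi>. prun F (F x (shd \<xi>)) (stl \<xi>) !! n) \<in> measurable SS (count_space UNIV)"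
    proof (rule measurable_compose_countable'[where f="\<lambda>i \<xi>. prun F i (stl \<xi>) !! n" and I=S])
      fix i show "(\<lambda>\<xi>. prun F i (stl \<xi>) !! n) \<in> measurable SS (count_space UNIV)"
        using measurable_compose[OF measurable_stl Suc.IH[of i, unfolded SS_def]] unfolding SS_def by simp
    next
      show "(\<lambda>\<xi>. F x (shd \<xi>)) \<in> measurable SS (count_space S)"
        unfolding SS_def by (rule measurable_compose[OF measurable_shd]) (simp add: FS)
    next
      show "countable S" using S(1) by (rule countable_finite)
    qed
    then show ?case unfolding prun_snthSuc .
  qed
  have meas: "prun F x \<in> measurable SS SC" for x
    unfolding SC_def by (rule measurable_stream_space2) (rule meas_n)
  define Pm where "Pm x = distr SS SC (prun F x)" for x
  have probSS: "prob_space SS" unfolding SS_def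
    by (rule prob_space.prob_space_stream_space) (rule prob_space_measure_pmf)
  have probPm: "prob_space (Pm x)" for x
    unfolding Pm_def by (rule prob_space.prob_space_distr[OF probSS meas])
  define cyl where "cyl As = {\<omega> \<in> space SC. \<forall>i<length As. \<omega>!!i \<in> As!i}" for As :: "'x set list"
  have cyl_sets: "cyl As \<in> sets SC" for As
  proof -
    have 1: "Measurable.pred SC (\<lambda>\<omega>. \<omega>!!i \<in> As!i)" for i unfolding SC_def
      by (rule pred_sets1[where P="\<lambda>x. x \<in> As!i" and f="\<lambda>\<omega>. \<omega>!!i", OF _ measurable_snth]) (simp only: sets_count_space Pow_UNIV UNIV_I)
    have "Measurable.pred SC (\<lambda>\<omega>. \<forall>i. i < length As \<longrightarrow> \<omega>!!i \<in> As!i)"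
      apply (rule pred_intros_countable)
      apply (rule pred_intros_imp')
      by (rule 1)
    then show ?thesis unfolding pred_def cyl_def .
  qed
  have spSS: "space SS = UNIV" unfolding SS_def by (simp add: space_stream_space)
  have spSC: "space SC = UNIV" unfolding SC_def by (simp add: space_stream_space)
  have mapN: "map_pmf (F x) N = \<kappa>p x" if "x \<in> S" for x
  proof -
    have "map_pmf (F x) N = map_pmf (\<lambda>y. if y \<in> S then y else x0) (map_pmf (\<lambda>g. g x) N)"
      by (simp add: pmf.map_comp o_def F_def[abs_def])
    also have "map_pmf (\<lambda>g. g x) N = \<kappa>p x"
      using Pi_pmf_component[OF S(1), of x x0 \<kappa>p] that by (simp add: N_def)
    also have "map_pmf (\<lambda>y. if y \<in> S then y else x0) (\<kappa>p x) = map_pmf (\<lambda>y. y) (\<kappa>p x)"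
      by (rule map_pmf_cong) (use S(3)[OF that] in auto)
    finally show ?thesis by simp
  qed
  have main: "emeasure (Pm x) (cyl As) = path_cyl K x As" if "x \<in> S" for x As
    using that
  proof (induction As arbitrary: x)
    case Nil
    have "cyl [] = space (Pm x)" by (simp add: cyl_def Pm_def)
    then show ?case using prob_space.emeasure_space_1[OF probPm] by simp
  next
    case (Cons A As)
    have "emeasure (Pm x) (cyl (A#As)) = emeasure SS (prun F x -` cyl (A#As) \<inter> space SS)"
      unfolding Pm_def by (rule emeasure_distr[OF meas cyl_sets])
    also have "\<dots> = (\<integral>\<^sup>+t. emeasure SS {\<xi>\<in>space SS. t ## \<xi> \<in> prun F x -` cyl (A#As) \<inter> space SS} \<partial>N)"
      unfolding SS_def
      by (rule prob_space.emeasure_stream_space[OF prob_space_measure_pmf])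
         (rule measurable_sets[OF meas[unfolded SS_def] cyl_sets])
    also have "\<dots> = (\<integral>\<^sup>+t. indicator A x * emeasure SS (prun F (F x t) -` cyl As \<inter> space SS) \<partial>N)"
    proof (intro nn_integral_cong)
      fix t
      have "{\<xi>\<in>space SS. t ## \<xi> \<in> prun F x -` cyl (A#As) \<inter> space SS} =
            (if x \<in> A then prun F (F x t) -` cyl As \<inter> space SS else {})"
      proof (rule set_eqI)
        fix \<xi>
        show "\<xi> \<in> {\<xi>\<in>space SS. t ## \<xi> \<in> prun F x -` cyl (A#As) \<inter> space SS} \<longleftrightarrow>
            \<xi> \<in> (if x \<in> A then prun F (F x t) -` cyl As \<inter> space SS else {})"
          using cyl_Cons_iff[of A As x "prun F (F x t) \<xi>"] unfolding spSS spSC cyl_def by (simp add: prun_Stream)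
      qed
      then show "emeasure SS {\<xi>\<in>space SS. t ## \<xi> \<in> prun F x -` cyl (A#As) \<inter> space SS} =
          indicator A x * emeasure SS (prun F (F x t) -` cyl As \<inter> space SS)"
        by (simp add: indicator_def)
    qed
    also have "\<dots> = indicator A x * (\<integral>\<^sup>+t. emeasure (Pm (F x t)) (cyl As) \<partial>N)"
      by (subst nn_integral_cmult) (simp_all add: Pm_def emeasure_distr[OF meas cyl_sets])
    also have "\<dots> = indicator A x * (\<integral>\<^sup>+t. path_cyl K (F x t) As \<partial>N)"
      using Cons.IH[OF FS] by simp
    also have "\<dots> = indicator A x * (\<integral>\<^sup>+y. path_cyl K y As \<partial>map_pmf (F x) N)"
      by simp
    also have "\<dots> = path_cyl K x (A#As)"
      using path_cyl_Cons_markov[of x A As] mapN[OF Cons.prems] by simp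
    finally show ?case .
  qed
  have "is_path_measure (count_space UNIV) K x0 (Pm x0)"
    unfolding is_path_measure_def
  proof (intro conjI allI impI)
    show "prob_space (Pm x0)" by (rule probPm)
    show "sets (Pm x0) = sets (stream_space (count_space UNIV))" by (simp add: Pm_def SC_def)
    fix As :: "'x set list"
    have "{\<omega> \<in> space (Pm x0). \<forall>i<length As. \<omega> !! i \<in> As ! i} = cyl As"
      by (simp add: Pm_def cyl_def)
    then show "emeasure (Pm x0) {\<omega> \<in> space (Pm x0). \<forall>i<length As. \<omega> !! i \<in> As ! i} = path_cyl K x0 As"
      using main[OF S(2)] by simp
  qed
  then show ?thesis unfolding K_def by blast
qed



lemma finite_mono_bound:
  fixes f :: "nat \<Rightarrow> 'b set"
  assumes "finite A" "A \<subseteq> (\<Union>k. f k)" "\<And>k k'. k \<le> k' \<Longrightarrow> f k \<subseteq> f k'"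
  shows "\<exists>L. A \<subseteq> f L"
  using assms(1,2)
proof (induction A rule: finite_induct)
  case empty then show ?case by simp
next
  case (insert a A)
  then obtain L where L: "A \<subseteq> f L" by blast
  from insert obtain k where k: "a \<in> f k" by blast
  have "insert a A \<subseteq> f (max k L)"
    using L k assms(3)[of k "max k L"] assms(3)[of L "max k L"] by auto
  then show ?case by blast
qed

locale prop2 =
  fixes T :: "'a::polish_space \<Rightarrow> 'u::finite \<Rightarrow> 'a measure"
    and Bs C :: "'a set set"
    and Fo Fu :: "'a set \<Rightarrow> 'u \<Rightarrow> 'a set set"
    and v :: "'a set" and U :: "'a set set"
    and \<sigma> :: "'a set \<Rightarrow> 'u"
  assumes cmp: "is_cmp T"
    and abstr: "is_abstraction Bs C"
    and Fo_ok: "F_over_ok T C Fo"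
    and Fu_ok: "F_under_ok T C Fu"
    and vC: "v \<in> C" and UC: "U \<subseteq> C"
begin

lemma finC: "finite C" using abstr by (simp add: is_abstraction_def measurable_partition_def)
lemma disjC: "disjoint C" using abstr by (simp add: is_abstraction_def measurable_partition_def)
lemma UnC: "\<Union>C = UNIV" using abstr by (simp add: is_abstraction_def measurable_partition_def)
lemma Csets: "c \<in> C \<Longrightarrow> c \<in> sets borel" using abstr by (auto simp: is_abstraction_def measurable_partition_def)
lemma Cne: "c \<in> C \<Longrightarrow> c \<noteq> {}" using abstr by (auto simp: is_abstraction_def)

lemma in_cell: "\<exists>c\<in>C. x \<in> c" using UnC by blast

lemma cell_of_eq: "c \<in> C \<Longrightarrow> x \<in> c \<Longrightarrow> cell_of C x = c"
  unfolding cell_of_def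
  by (rule the_equality) (use disjointD[OF disjC] in blast)+

lemma T_prob: "prob_space (T x u)" and T_sets: "sets (T x u) = sets borel"
proof -
  have "T x u \<in> space (prob_algebra borel)"
    using measurable_space[OF cmp[unfolded is_cmp_def, rule_format, of u], of x] by simp
  then show "prob_space (T x u)" "sets (T x u) = sets borel" by (auto simp: space_prob_algebra)
qed

lemma T_space: "space (T x u) = UNIV"
  using sets_eq_imp_space_eq[OF T_sets] by simp

lemma FoC: "c \<in> C \<Longrightarrow> Fo c u \<subseteq> C" using Fo_ok by (simp add: F_over_ok_def)
lemma FuC: "c \<in> C \<Longrightarrow> Fu c u \<subseteq> C" using Fu_ok by (auto simp: F_under_ok_def)
lemma Fo_pos: "c \<in> C \<Longrightarrow> c' \<in> C \<Longrightarrow> s \<in> c \<Longrightarrow> measure (T s u) c' > 0 \<Longrightarrow> c' \<in> Fo c u"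
proof -
  assume a: "c \<in> C" "c' \<in> C" "s \<in> c" "measure (T s u) c' > 0"
  have "{c' \<in> C. \<exists>s\<in>c. measure (T s u) c' > 0} \<subseteq> Fo c u" using Fo_ok a(1) by (simp add: F_over_ok_def)
  then show ?thesis using a by blast
qed

lemma Fu_Fo: "c \<in> C \<Longrightarrow> Fu c u \<subseteq> Fo c u"
proof
  fix c' assume c: "c \<in> C" and c': "c' \<in> Fu c u"
  then obtain e where e: "e > 0" "\<forall>s\<in>c. measure (T s u) c' \<ge> e" and c'C: "c' \<in> C"
  proof -
    have "Fu c u \<subseteq> {c' \<in> C. \<exists>\<epsilon>>0. \<forall>s\<in>c. measure (T s u) c' \<ge> \<epsilon>}"
      using Fu_ok c by (simp add: F_under_ok_def)
    then show ?thesis using c' that by blast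
  qed
  obtain s where "s \<in> c" using Cne[OF c] by blast
  then show "c' \<in> Fo c u" using e c'C c by (intro Fo_pos[of c c' s]) auto
qed

lemma fin_Fo: "c \<in> C \<Longrightarrow> finite (Fo c u)" using FoC finC finite_subset by blast
lemma fin_Fu: "c \<in> C \<Longrightarrow> finite (Fu c u)" using FuC finC finite_subset by blast

lemma Fo_null: "c \<in> C \<Longrightarrow> x \<in> c \<Longrightarrow> c' \<in> C \<Longrightarrow> c' \<notin> Fo c u \<Longrightarrow> c' \<in> null_sets (T x u)"
proof -
  assume a: "c \<in> C" "x \<in> c" "c' \<in> C" "c' \<notin> Fo c u"
  interpret prob_space "T x u" by (rule T_prob)
  have cs: "c' \<in> sets (T x u)" using Csets[OF a(3)] T_sets by simp
  have "\<not> measure (T x u) c' > 0" using Fo_pos[of c c' x u] a by blast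
  then have "measure (T x u) c' = 0" using measure_nonneg[of "T x u" c'] by linarith
  then show ?thesis using cs by (simp add: null_sets_def emeasure_eq_measure)
qed

lemma AE_Fo: "c \<in> C \<Longrightarrow> x \<in> c \<Longrightarrow> AE y in T x u. y \<in> \<Union>(Fo c u)"
proof -
  assume a: "c \<in> C" "x \<in> c"
  have "AE y in T x u. \<forall>c'\<in>C - Fo c u. y \<notin> c'"
    using finC by (intro AE_finite_allI) (auto intro!: AE_not_in Fo_null[OF a])
  then show ?thesis
  proof (rule AE_mp, intro AE_I2 impI)
    fix y assume "\<forall>c'\<in>C - Fo c u. y \<notin> c'"
    then show "y \<in> \<Union>(Fo c u)" using in_cell[of y] by blast
  qed
qed

lemma Fo_ne: "c \<in> C \<Longrightarrow> Fo c u \<noteq> {}"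
proof
  assume c: "c \<in> C" and e: "Fo c u = {}"
  obtain x where x: "x \<in> c" using Cne[OF c] by blast
  have "AE y in T x u. y \<in> \<Union>(Fo c u)" by (rule AE_Fo[OF c x])
  then have "AE y in T x u. False" using e by simp
  then show False using prob_space.AE_False[OF T_prob] by simp
qed

lemma Vr_insert: "c \<in> C \<Longrightarrow> c' \<in> Fo c u \<Longrightarrow> insert c' (Fu c u) \<in> Vr_of C Fo Fu c u"
  unfolding Vr_of_def using FoC[of c u] Fu_Fo[of c u] fin_Fu[of c u]
  by (auto simp: card_insert_if Suc_le_eq card_gt_0_iff)

lemma Vr_Fu: "c \<in> C \<Longrightarrow> Fu c u \<noteq> {} \<Longrightarrow> Fu c u \<in> Vr_of C Fo Fu c u"
  unfolding Vr_of_def using FuC[of c u] Fu_Fo[of c u] fin_Fu[of c u]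
  by (auto simp: Suc_le_eq card_gt_0_iff)

lemma Vr_ne: "c \<in> C \<Longrightarrow> Vr_of C Fo Fu c u \<noteq> {}"
  using Fo_ne[of c u] Vr_insert[of c _ u] by blast

lemma Vr_props: "r \<in> Vr_of C Fo Fu c u \<Longrightarrow> r \<subseteq> C \<and> r \<noteq> {} \<and> finite r"
  unfolding Vr_of_def by (auto intro: card_ge_0_finite)

section \<open>Attractor\<close>

fun attr :: "nat \<Rightarrow> 'a set set" where
  "attr 0 = U"
| "attr (Suc k) = attr k \<union> {c \<in> C. Fu c (\<sigma> c) \<inter> attr k \<noteq> {} \<or> (Fu c (\<sigma> c) = {} \<and> Fo c (\<sigma> c) \<subseteq> attr k)}"

lemma attr_mono: "k \<le> k' \<Longrightarrow> attr k \<subseteq> attr k'"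
  by (induction k' rule: dec_induct) auto

lemma attr_C: "attr k \<subseteq> C"
  using UC by (induction k) auto

definition "Attr = (\<Union>k. attr k)"
definition "Z = C - Attr"

lemma attr_bound: "\<exists>L. Attr \<subseteq> attr L"
proof -
  have "Attr \<subseteq> C" unfolding Attr_def using attr_C by blast
  then have "finite Attr" using finC finite_subset by blast
  then show ?thesis using finite_mono_bound[of Attr attr] attr_mono unfolding Attr_def by blast
qed

lemma Z_props:
  assumes "c \<in> Z"
  shows "c \<in> C" "c \<notin> U" "Fu c (\<sigma> c) \<inter> Attr = {}" "Fu c (\<sigma> c) = {} \<Longrightarrow> \<exists>c'\<in>Fo c (\<sigma> c). c' \<notin> Attr"
proof -
  show c: "c \<in> C" using assms by (simp add: Z_def)
  have nA: "c \<notin> attr k" for k using assms by (simp add: Z_def Attr_def)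
  show "c \<notin> U" using nA[of 0] by simp
  show "Fu c (\<sigma> c) \<inter> Attr = {}"
  proof (rule ccontr)
    assume "Fu c (\<sigma> c) \<inter> Attr \<noteq> {}"
    then obtain k where "Fu c (\<sigma> c) \<inter> attr k \<noteq> {}" unfolding Attr_def by blast
    then have "c \<in> attr (Suc k)" using c by simp
    then show False using nA by blast
  qed
  assume e: "Fu c (\<sigma> c) = {}"
  show "\<exists>c'\<in>Fo c (\<sigma> c). c' \<notin> Attr"
  proof (rule ccontr)
    assume "\<not> ?thesis"
    then have "Fo c (\<sigma> c) \<subseteq> Attr" by blast
    moreover obtain L where "Attr \<subseteq> attr L" using attr_bound by blast
    ultimately have "c \<in> attr (Suc L)" using c e by auto
    then show False using nA by blast
  qed
qed

fun ys :: "nat \<Rightarrow> 'a set set" where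
  "ys 0 = Z"
| "ys (Suc k) = ys k \<union> {c \<in> C - U. Fo c (\<sigma> c) \<inter> ys k \<noteq> {}}"

lemma ys_mono: "k \<le> k' \<Longrightarrow> ys k \<subseteq> ys k'"
  by (induction k' rule: dec_induct) auto

lemma ys_C: "ys k \<subseteq> C"
  by (induction k) (auto simp: Z_def)

definition "Y = (\<Union>k. ys k)"

end



context prop2 begin

definition "G = C - Y"

lemma G_closed: "c \<in> G \<Longrightarrow> c \<notin> U \<Longrightarrow> Fo c (\<sigma> c) \<subseteq> G"
proof
  fix c' assume c: "c \<in> G" "c \<notin> U" and c': "c' \<in> Fo c (\<sigma> c)"
  have cC: "c \<in> C" and cY: "c \<notin> Y" using c by (auto simp: G_def)
  have c'C: "c' \<in> C" using FoC[OF cC] c' by blast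
  show "c' \<in> G"
  proof (rule ccontr)
    assume "c' \<notin> G"
    then have "c' \<in> Y" using c'C by (simp add: G_def)
    then obtain k where k: "c' \<in> ys k" unfolding Y_def by blast
    have "Fo c (\<sigma> c) \<inter> ys k \<noteq> {}" using c' k by blast
    then have "c \<in> ys (Suc k)" using cC c(2) by simp
    then show False using cY unfolding Y_def by blast
  qed
qed

lemma G_attr: "\<exists>L. G \<subseteq> attr L"
proof -
  obtain L where L: "Attr \<subseteq> attr L" using attr_bound by blast
  have "Z \<subseteq> Y" unfolding Y_def by (metis UNIV_I UN_upper ys.simps(1))
  then have "G \<subseteq> Attr" unfolding G_def Z_def by blast
  then show ?thesis using L by blast
qed

lemma eps_exists: "\<exists>\<epsilon>>0. \<epsilon> \<le> 1 \<and> (\<forall>c\<in>C. \<forall>c'\<in>Fu c (\<sigma> c). \<forall>x\<in>c. \<epsilon> \<le> measure (T x (\<sigma> c)) c')"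
proof -
  define PS where "PS = Sigma C (\<lambda>c. Fu c (\<sigma> c))"
  have fPS: "finite PS" unfolding PS_def using finC fin_Fu by blast
  have "\<forall>p\<in>PS. \<exists>e>0. \<forall>x\<in>fst p. e \<le> measure (T x (\<sigma> (fst p))) (snd p)"
  proof
    fix p assume "p \<in> PS"
    then obtain c c' where p: "p = (c, c')" "c \<in> C" "c' \<in> Fu c (\<sigma> c)" unfolding PS_def by blast
    have "Fu c (\<sigma> c) \<subseteq> {c' \<in> C. \<exists>\<epsilon>>0. \<forall>s\<in>c. measure (T s (\<sigma> c)) c' \<ge> \<epsilon>}"
      using Fu_ok p(2) by (simp add: F_under_ok_def)
    then show "\<exists>e>0. \<forall>x\<in>fst p. e \<le> measure (T x (\<sigma> (fst p))) (snd p)" using p by auto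
  qed
  then obtain e where e: "\<forall>p\<in>PS. e p > 0 \<and> (\<forall>x\<in>fst p. e p \<le> measure (T x (\<sigma> (fst p))) (snd p))"
    by metis
  define \<epsilon> where "\<epsilon> = Min (insert 1 (e ` PS))"
  have fin: "finite (insert 1 (e ` PS))" using fPS by simp
  have "\<epsilon> > 0" unfolding \<epsilon>_def using fin e by (subst Min_gr_iff) auto
  moreover have "\<epsilon> \<le> 1" unfolding \<epsilon>_def using fin by (intro Min_le) auto
  moreover have "\<epsilon> \<le> measure (T x (\<sigma> c)) c'" if "c \<in> C" "c' \<in> Fu c (\<sigma> c)" "x \<in> c" for c c' x
  proof -
    have p: "(c, c') \<in> PS" using that by (simp add: PS_def)
    have "\<epsilon> \<le> e (c, c')" unfolding \<epsilon>_def using fin p by (intro Min_le) auto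
    also have "\<dots> \<le> measure (T x (\<sigma> c)) c'" using e p that(3) by auto
    finally show ?thesis .
  qed
  ultimately show ?thesis by blast
qed

lemma QinvU_sets: "Qinv U \<in> sets borel"
  unfolding Qinv_def using UC finC Csets finite_subset
  by (intro sets.finite_Union) auto

lemma cmp_part:
  assumes vY: "v \<notin> Y"
  shows "\<forall>s\<in>v. \<forall>P. cmp_path_measure T (refinement C \<sigma>) s P \<longrightarrow>
           emeasure P {\<omega> \<in> space P. \<exists>i. \<omega> !! i \<in> Qinv U} = 1"
proof (intro ballI allI impI)
  fix s P assume sv: "s \<in> v" and PM0: "cmp_path_measure T (refinement C \<sigma>) s P"
  define \<kappa> where "\<kappa> x = T x (refinement C \<sigma> x)" for x
  define K where "K h = T (last h) (refinement C \<sigma> (last h))" for h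
  interpret mk K \<kappa>
    by (rule mk.intro) (simp add: K_def \<kappa>_def, simp add: \<kappa>_def T_prob)
  have PM: "is_path_measure borel K s P" using PM0 by (simp add: cmp_path_measure_def K_def[abs_def])
  define B where "B = - Qinv U"
  define pc where "pc m x = path_cyl K x (replicate (Suc m) B)" for m x
  have pc_Suc: "pc (Suc m) x = indicator B x * (\<integral>\<^sup>+y. pc m y \<partial>\<kappa> x)" for m x
    unfolding pc_def by (subst replicate_Suc[of "Suc m"], subst path_cyl_Cons_markov) (rule refl)
  have pc_U: "x \<in> Qinv U \<Longrightarrow> pc m x = 0" for m x
    unfolding pc_def by (simp add: B_def)
  have pc_mono': "m \<le> m' \<Longrightarrow> pc m' x \<le> pc m x" for m m' x
    unfolding pc_def by (rule pc_mono) simp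
  have pc_le1: "pc m x \<le> 1" for m x unfolding pc_def by (rule pc_le_1)
  have \<kappa>_cell: "c \<in> C \<Longrightarrow> x \<in> c \<Longrightarrow> \<kappa> x = T x (\<sigma> c)" for c x
    by (simp add: \<kappa>_def refinement_def cell_of_eq)
  obtain \<epsilon> where \<epsilon>: "\<epsilon> > 0" "\<epsilon> \<le> 1" "\<And>c c' x. c \<in> C \<Longrightarrow> c' \<in> Fu c (\<sigma> c) \<Longrightarrow> x \<in> c \<Longrightarrow> \<epsilon> \<le> measure (T x (\<sigma> c)) c'"
    using eps_exists by blast
  have GC: "G \<subseteq> C" by (auto simp: G_def)
  have claim: "\<And>c x j n \<beta>. c \<in> G \<Longrightarrow> c \<in> attr r \<Longrightarrow> x \<in> c \<Longrightarrow> r \<le> n \<Longrightarrow> 0 \<le> \<beta> \<Longrightarrow>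
      (\<forall>y\<in>\<Union>G. pc j y \<le> ennreal \<beta>) \<Longrightarrow> pc (j + n) x \<le> ennreal (\<beta> * (1 - \<epsilon>^r))" for r
  proof (induction r)
    case (0 c x j n \<beta>)
    then have "x \<in> Qinv U" by (auto simp: Qinv_def)
    then show ?case using pc_U by simp
  next
    case (Suc r c x j n \<beta>)
    have pow_le: "\<epsilon>^Suc r \<le> \<epsilon>^r" using \<epsilon> by (simp add: mult_left_le_one_le)
    have mono1: "ennreal (\<beta> * (1 - \<epsilon>^r)) \<le> ennreal (\<beta> * (1 - \<epsilon>^Suc r))"
      using pow_le Suc.prems(5) by (intro ennreal_leI mult_left_mono) auto
    show ?case
    proof (cases "c \<in> attr r")
      case True
      have "pc (j + n) x \<le> ennreal (\<beta> * (1 - \<epsilon>^r))"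
        using Suc.IH[OF Suc.prems(1) True Suc.prems(3) _ Suc.prems(5,6)] Suc.prems(4) by simp
      then show ?thesis using mono1 by (rule order_trans)
    next
      case False
      have cC: "c \<in> C" using Suc.prems(1) GC by blast
      have cU: "c \<notin> U" using False attr_mono[of 0 r] by auto
      have FoG: "Fo c (\<sigma> c) \<subseteq> G" by (rule G_closed[OF Suc.prems(1) cU])
      from Suc.prems(4) obtain n' where n': "n = Suc n'" "r \<le> n'" by (cases n) auto
      have kx: "\<kappa> x = T x (\<sigma> c)" by (rule \<kappa>_cell[OF cC Suc.prems(3)])
      interpret Tx: prob_space "T x (\<sigma> c)" by (rule T_prob)
      have AEG: "AE y in T x (\<sigma> c). y \<in> \<Union>G" using AE_Fo[OF cC Suc.prems(3), of "\<sigma> c"] FoG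
        by (auto elim!: AE_mp)
      have bndG: "pc (j + n') y \<le> ennreal \<beta>" if "y \<in> \<Union>G" for y
        using pc_mono'[of j "j + n'" y] Suc.prems(6) that by (auto intro: order_trans)
      have "pc (j + n) x = indicator B x * (\<integral>\<^sup>+y. pc (j + n') y \<partial>T x (\<sigma> c))"
        using pc_Suc[of "j + n'" x] kx n'(1) by simp
      also have "\<dots> \<le> (\<integral>\<^sup>+y. pc (j + n') y \<partial>T x (\<sigma> c))"
        by (simp add: indicator_def)
      also have "\<dots> \<le> ennreal (\<beta> * (1 - \<epsilon>^Suc r))"
      proof -
        from False Suc.prems(2) cC have
          cases: "(\<exists>c'. c' \<in> Fu c (\<sigma> c) \<and> c' \<in> attr r) \<or> (Fu c (\<sigma> c) = {} \<and> Fo c (\<sigma> c) \<subseteq> attr r)"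
          by auto
        then show ?thesis
        proof
          assume "\<exists>c'. c' \<in> Fu c (\<sigma> c) \<and> c' \<in> attr r"
          then obtain c' where c': "c' \<in> Fu c (\<sigma> c)" "c' \<in> attr r" by blast
          have c'G: "c' \<in> G" using c'(1) Fu_Fo[OF cC] FoG by blast
          have c'C: "c' \<in> C" using c'G GC by blast
          have c's: "c' \<in> sets (T x (\<sigma> c))" using Csets[OF c'C] T_sets by simp
          have nc's: "-c' \<in> sets (T x (\<sigma> c))" using sets.compl_sets[OF c's] T_space
            by (simp add: Compl_eq_Diff_UNIV)
          define p where "p = measure (T x (\<sigma> c)) c'"
          have p_ge: "\<epsilon> \<le> p" unfolding p_def using \<epsilon>(3)[OF cC c'(1) Suc.prems(3)] .
          have p_le: "p \<le> 1" unfolding p_def by simp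
          have em1: "emeasure (T x (\<sigma> c)) c' = ennreal p" unfolding p_def by (simp add: Tx.emeasure_eq_measure)
          have em2: "emeasure (T x (\<sigma> c)) (-c') = ennreal (1 - p)"
            using Tx.prob_compl[OF c's] T_space unfolding p_def
            by (simp add: Tx.emeasure_eq_measure Compl_eq_Diff_UNIV)
          have "(\<integral>\<^sup>+y. pc (j + n') y \<partial>T x (\<sigma> c)) \<le>
                (\<integral>\<^sup>+y. ennreal (\<beta> * (1 - \<epsilon>^r)) * indicator c' y + ennreal \<beta> * indicator (-c') y \<partial>T x (\<sigma> c))"
          proof (rule nn_integral_mono_AE)
            show "AE y in T x (\<sigma> c). pc (j + n') y \<le> ennreal (\<beta> * (1 - \<epsilon>^r)) * indicator c' y + ennreal \<beta> * indicator (-c') y"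
              using AEG
            proof (rule AE_mp, intro AE_I2 impI)
              fix y assume yG: "y \<in> \<Union>G"
              show "pc (j + n') y \<le> ennreal (\<beta> * (1 - \<epsilon>^r)) * indicator c' y + ennreal \<beta> * indicator (-c') y"
              proof (cases "y \<in> c'")
                case True
                then show ?thesis using Suc.IH[OF c'G c'(2) True n'(2) Suc.prems(5,6)] by simp
              next
                case False
                then show ?thesis using bndG[OF yG] by simp
              qed
            qed
          qed
          also have "\<dots> = ennreal (\<beta> * (1 - \<epsilon>^r)) * emeasure (T x (\<sigma> c)) c' + ennreal \<beta> * emeasure (T x (\<sigma> c)) (-c')"
            using c's nc's by (subst nn_integral_add) (auto simp: nn_integral_cmult_indicator)
          also have "\<dots> = ennreal (\<beta> * (1 - \<epsilon>^r) * p + \<beta> * (1 - p))"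
          proof -
            have h1: "0 \<le> 1 - \<epsilon>^r" using \<epsilon> by (simp add: power_le_one)
            have h2: "0 \<le> p" using p_ge \<epsilon> by simp
            have h3: "0 \<le> \<beta> * (1 - \<epsilon>^r)" using h1 Suc.prems(5) by simp
            have h4: "0 \<le> 1 - p" using p_le by simp
            show ?thesis unfolding em1 em2
              using ennreal_mult[OF h3 h2] ennreal_mult[OF Suc.prems(5) h4]
                ennreal_plus[OF mult_nonneg_nonneg[OF h3 h2] mult_nonneg_nonneg[OF Suc.prems(5) h4]]
              by simp
          qed
          also have "\<dots> \<le> ennreal (\<beta> * (1 - \<epsilon>^Suc r))"
          proof (rule ennreal_leI)
            have "\<beta> * \<epsilon>^r * \<epsilon> \<le> \<beta> * \<epsilon>^r * p"
              using p_ge Suc.prems(5) \<epsilon>(1) by (intro mult_left_mono) auto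
            then show "\<beta> * (1 - \<epsilon>^r) * p + \<beta> * (1 - p) \<le> \<beta> * (1 - \<epsilon>^Suc r)"
              by (simp add: algebra_simps)
          qed
          finally show ?thesis .
        next
          assume a: "Fu c (\<sigma> c) = {} \<and> Fo c (\<sigma> c) \<subseteq> attr r"
          have "(\<integral>\<^sup>+y. pc (j + n') y \<partial>T x (\<sigma> c)) \<le> (\<integral>\<^sup>+y. ennreal (\<beta> * (1 - \<epsilon>^r)) \<partial>T x (\<sigma> c))"
          proof (rule nn_integral_mono_AE)
            show "AE y in T x (\<sigma> c). pc (j + n') y \<le> ennreal (\<beta> * (1 - \<epsilon>^r))"
              using AE_Fo[OF cC Suc.prems(3), of "\<sigma> c"]
            proof (rule AE_mp, intro AE_I2 impI)
              fix y assume "y \<in> \<Union>(Fo c (\<sigma> c))"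
              then obtain c' where c': "c' \<in> Fo c (\<sigma> c)" "y \<in> c'" by blast
              have "c' \<in> G" "c' \<in> attr r" using c' FoG a by auto
              then show "pc (j + n') y \<le> ennreal (\<beta> * (1 - \<epsilon>^r))"
                using Suc.IH[OF _ _ c'(2) n'(2) Suc.prems(5,6)] by blast
            qed
          qed
          also have "\<dots> = ennreal (\<beta> * (1 - \<epsilon>^r))"
            by (simp add: Tx.emeasure_space_1)
          finally show ?thesis using mono1 by (rule order_trans)
        qed
      qed
      finally show ?thesis .
    qed
  qed
  obtain L where L: "G \<subseteq> attr L" using G_attr by blast
  define q where "q = 1 - \<epsilon>^L"
  have q: "0 \<le> q" "q < 1" using \<epsilon> by (auto simp: q_def power_le_one)
  have decay: "\<forall>x\<in>\<Union>G. pc (k * L) x \<le> ennreal (q^k)" for k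
  proof (induction k)
    case 0 then show ?case using pc_le1 by simp
  next
    case (Suc k)
    show ?case
    proof
      fix x assume "x \<in> \<Union>G"
      then obtain c where c: "c \<in> G" "x \<in> c" by blast
      have "pc (k * L + L) x \<le> ennreal (q^k * (1 - \<epsilon>^L))"
        using claim[of c L x L "q^k" "k * L"] c L Suc.IH q by auto
      then show "pc (Suc k * L) x \<le> ennreal (q ^ Suc k)"
        by (simp add: q_def add.commute mult.commute)
    qed
  qed
  have vG: "v \<in> G" using vC vY by (simp add: G_def)
  have sG: "s \<in> \<Union>G" using vG sv by blast
  show "emeasure P {\<omega> \<in> space P. \<exists>i. \<omega> !! i \<in> Qinv U} = 1"
  proof (rule reach_one[OF PM _ QinvU_sets])
    show "space borel = UNIV" by simp
    fix d :: real assume "d > 0"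
    then obtain k where k: "q^k < d" using real_arch_pow_inv q(2) by blast
    have "path_cyl K s (replicate (Suc (k * L)) (- Qinv U)) \<le> ennreal (q^k)"
      using decay[of k] sG unfolding pc_def B_def by blast
    also have "\<dots> \<le> ennreal d" using k by (intro ennreal_leI) simp
    finally show "\<exists>m. path_cyl K s (replicate m (- Qinv U)) \<le> ennreal d" by blast
  qed
qed

end



context prop2 begin

definition Good where
  "Good c r \<longleftrightarrow> (c \<in> Z \<longrightarrow> r \<subseteq> Z) \<and> (\<forall>k. c \<in> ys (Suc k) \<and> c \<notin> ys k \<longrightarrow> r \<inter> ys k \<noteq> {})"

definition radv where
  "radv c u = (SOME r. r \<in> Vr_of C Fo Fu c u \<and> (u = \<sigma> c \<longrightarrow> Good c r))"

lemma ys_uniq: "c \<in> ys (Suc k) \<Longrightarrow> c \<notin> ys k \<Longrightarrow> c \<in> ys (Suc k') \<Longrightarrow> c \<notin> ys k' \<Longrightarrow> k = k'"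
proof (rule ccontr)
  assume a: "c \<in> ys (Suc k)" "c \<notin> ys k" "c \<in> ys (Suc k')" "c \<notin> ys k'" "k \<noteq> k'"
  show False
  proof (cases "k < k'")
    case True then show False using ys_mono[of "Suc k" k'] a by auto
  next
    case False then have "k' < k" using a(5) by simp
    then show False using ys_mono[of "Suc k'" k] a by auto
  qed
qed

lemma Z_ys: "Z \<subseteq> ys k" using ys_mono[of 0 k] by simp

lemma radv_ex:
  assumes cC: "c \<in> C"
  shows "\<exists>r. r \<in> Vr_of C Fo Fu c u \<and> (u = \<sigma> c \<longrightarrow> Good c r)"
proof (cases "u = \<sigma> c")
  case False then show ?thesis using Vr_ne[OF cC, of u] by blast
next
  case True
  show ?thesis
  proof (cases "c \<in> Z")
    case cZ: True
    have sec: "\<forall>k. c \<in> ys (Suc k) \<and> c \<notin> ys k \<longrightarrow> r \<inter> ys k \<noteq> {}" for r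
      using cZ Z_ys by blast
    show ?thesis
    proof (cases "Fu c (\<sigma> c) = {}")
      case False
      have "Fu c (\<sigma> c) \<subseteq> Z" using Z_props(3)[OF cZ] FuC[OF cC] by (auto simp: Z_def)
      then show ?thesis using Vr_Fu[OF cC False] True sec unfolding Good_def by blast
    next
      case e: True
      obtain c' where c': "c' \<in> Fo c (\<sigma> c)" "c' \<notin> Attr" using Z_props(4)[OF cZ e] by blast
      have "c' \<in> Z" using c' FoC[OF cC] by (auto simp: Z_def)
      then have "insert c' (Fu c (\<sigma> c)) \<subseteq> Z" using e by simp
      then show ?thesis using Vr_insert[OF cC c'(1)] True sec unfolding Good_def by blast
    qed
  next
    case cZ: False
    show ?thesis
    proof (cases "\<exists>k. c \<in> ys (Suc k) \<and> c \<notin> ys k")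
      case False
      then show ?thesis using Vr_ne[OF cC, of u] cZ unfolding Good_def by blast
    next
      case True
      then obtain k where k: "c \<in> ys (Suc k)" "c \<notin> ys k" by blast
      then have "Fo c (\<sigma> c) \<inter> ys k \<noteq> {}" by simp
      then obtain c' where c': "c' \<in> Fo c (\<sigma> c)" "c' \<in> ys k" by blast
      have "Good c (insert c' (Fu c (\<sigma> c)))"
        unfolding Good_def using cZ ys_uniq[OF k] c'(2) by blast
      then show ?thesis using Vr_insert[OF cC c'(1)] \<open>u = \<sigma> c\<close> by blast
    qed
  qed
qed

lemma radv: "c \<in> C \<Longrightarrow> radv c u \<in> Vr_of C Fo Fu c u \<and> (u = \<sigma> c \<longrightarrow> Good c (radv c u))"
  unfolding radv_def by (rule someI_ex) (rule radv_ex)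

definition gs :: "('a, 'u) gvtx \<Rightarrow> ('a, 'u) gvtx pmf" where
  "gs x = (case x of GV0 c \<Rightarrow> return_pmf (GV1 c (\<sigma> c))
                   | GV1 c u \<Rightarrow> return_pmf (GVr (radv c u))
                   | GVr r \<Rightarrow> pmf_of_set (GV0 ` r))"

definition adv :: "('a, 'u) gvtx list \<Rightarrow> ('a, 'u) gvtx pmf" where
  "adv h = return_pmf (case last h of GV1 c u \<Rightarrow> GVr (radv c u) | _ \<Rightarrow> GV0 v)"

lemma adv_strategy: "p1_strategy C Fo Fu adv"
  unfolding p1_strategy_def adv_def using radv by auto

lemma game_step_gs: "game_step \<sigma> adv h = gs (last h)"
  by (cases "last h") (simp_all add: gs_def adv_def)

lemma game_part:
  assumes vY: "v \<in> Y"
  shows "\<exists>\<pi>1 P. p1_strategy C Fo Fu \<pi>1 \<and> game_measure \<sigma> \<pi>1 v P \<and>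
            emeasure P {\<omega> \<in> space P. \<exists>i. \<omega> !! i \<in> GV0 ` U} \<noteq> 1"
proof -
  define RS where "RS = {r. r \<subseteq> C \<and> r \<noteq> {}}"
  define S :: "('a, 'u) gvtx set" where "S = GV0 ` C \<union> (\<lambda>(c, u). GV1 c u) ` (C \<times> UNIV) \<union> GVr ` RS"
  have finS: "finite S" unfolding S_def RS_def using finC
    by (intro finite_UnI finite_imageI finite_cartesian_product) (auto intro: finite_subset[of _ "Pow C"] simp: finite)
  have Sclosed: "set_pmf (gs x) \<subseteq> S" if "x \<in> S" for x
  proof -
    from that consider (a) c where "x = GV0 c" "c \<in> C" | (b) c u where "x = GV1 c u" "c \<in> C"
      | (c) r where "x = GVr r" "r \<in> RS" unfolding S_def by (auto simp: image_iff)
    then show ?thesis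
    proof cases
      case a then show ?thesis by (auto simp: gs_def S_def)
    next
      case b then show ?thesis using radv[OF b(2), of u] Vr_props[of "radv c u" c u]
        by (auto simp: gs_def S_def RS_def)
    next
      case c
      then have "finite r" "r \<noteq> {}" "r \<subseteq> C" using finC finite_subset by (auto simp: RS_def)
      then show ?thesis using c by (auto simp: gs_def S_def)
    qed
  qed
  have vS: "GV0 v \<in> S" using vC by (simp add: S_def)
  obtain P where PM: "is_path_measure (count_space UNIV) (\<lambda>h. measure_pmf (gs (last h))) (GV0 v) P"
    using exists_path_measure[of S "GV0 v" gs, OF finS vS Sclosed] by blast
  have GM: "game_measure \<sigma> adv v P"
    unfolding game_measure_def game_step_gs using PM .
  define Kg where "Kg h = measure_pmf (gs (last h))" for h
  interpret mk Kg "\<lambda>x. measure_pmf (gs x)"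
    by (rule mk.intro) (simp add: Kg_def, rule prob_space_measure_pmf)
  define Bg :: "('a, 'u) gvtx set" where "Bg = - (GV0 ` U)"
  define pcG where "pcG m x = path_cyl Kg x (replicate (Suc m) Bg)" for m x
  have pcG_Suc: "pcG (Suc m) x = indicator Bg x * (\<integral>\<^sup>+y. pcG m y \<partial>measure_pmf (gs x))" for m x
    unfolding pcG_def by (subst replicate_Suc[of "Suc m"], subst path_cyl_Cons_markov) (rule refl)
  have pcG_mono: "m \<le> m' \<Longrightarrow> pcG m' x \<le> pcG m x" for m m' x
    unfolding pcG_def by (rule pc_mono) simp
  have pcG_0: "pcG 0 x = indicator Bg x" for x unfolding pcG_def by simp
  define TS :: "('a, 'u) gvtx set" where "TS = GV0 ` Z \<union> (\<lambda>c. GV1 c (\<sigma> c)) ` Z \<union> GVr ` {r. r \<subseteq> Z \<and> r \<noteq> {} \<and> finite r}"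
  have TS_B: "x \<in> Bg" if "x \<in> TS" for x
    using that Z_props(2) by (auto simp: TS_def Bg_def)
  have TS_closed: "set_pmf (gs x) \<subseteq> TS" if "x \<in> TS" for x
  proof -
    from that consider (a) c where "x = GV0 c" "c \<in> Z" | (b) c where "x = GV1 c (\<sigma> c)" "c \<in> Z"
      | (c) r where "x = GVr r" "r \<subseteq> Z" "r \<noteq> {}" "finite r" unfolding TS_def by blast
    then show ?thesis
    proof cases
      case a then show ?thesis by (auto simp: gs_def TS_def)
    next
      case b
      have cC: "c \<in> C" using b(2) Z_props(1) by blast
      have "radv c (\<sigma> c) \<subseteq> Z" using radv[OF cC, of "\<sigma> c"] b(2) by (simp add: Good_def)
      then show ?thesis using b radv[OF cC, of "\<sigma> c"] Vr_props[of "radv c (\<sigma> c)" c "\<sigma> c"]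
        by (auto simp: gs_def TS_def)
    next
      case c then show ?thesis by (auto simp: gs_def TS_def)
    qed
  qed
  have trap: "pcG m x = 1" if "x \<in> TS" for m x
    using that
  proof (induction m arbitrary: x)
    case 0 then show ?case using TS_B by (simp add: pcG_0)
  next
    case (Suc m)
    have "(\<integral>\<^sup>+y. pcG m y \<partial>measure_pmf (gs x)) = (\<integral>\<^sup>+y. 1 \<partial>measure_pmf (gs x))"
    proof (rule nn_integral_cong_AE)
      show "AE y in measure_pmf (gs x). pcG m y = 1"
        using AE_measure_pmf[of "gs x"]
        by (rule AE_mp) (use TS_closed[OF Suc.prems] Suc.IH in auto)
    qed
    also have "\<dots> = 1" by simp
    finally show ?case using TS_B[OF Suc.prems] by (simp add: pcG_Suc)
  qed
  have cardC: "card C \<ge> 1" using vC finC by (metis One_nat_def Suc_leI card_gt_0_iff empty_iff)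
  define \<delta> where "\<delta> = 1 / real (card C)"
  have \<delta>: "0 < \<delta>" "\<delta> \<le> 1" using cardC by (auto simp: \<delta>_def)
  have lower: "\<forall>c\<in>ys k. \<forall>m. ennreal (\<delta>^k) \<le> pcG m (GV0 c)" for k
  proof (induction k)
    case 0
    show ?case
    proof (intro ballI allI)
      fix c m assume "c \<in> ys 0"
      then have "GV0 c \<in> TS" by (simp add: TS_def)
      then show "ennreal (\<delta>^0) \<le> pcG m (GV0 c)" using trap by simp
    qed
  next
    case (Suc k)
    show ?case
    proof (intro ballI allI)
      fix c m assume c: "c \<in> ys (Suc k)"
      have pw: "\<delta>^Suc k \<le> \<delta>^k" using \<delta> by (simp add: mult_left_le_one_le)
      show "ennreal (\<delta>^Suc k) \<le> pcG m (GV0 c)"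
      proof (cases "c \<in> ys k")
        case True
        then have "ennreal (\<delta>^k) \<le> pcG m (GV0 c)" using Suc.IH by blast
        then show ?thesis using pw by (meson ennreal_leI order_trans)
      next
        case False
        have cCU: "c \<in> C" "c \<notin> U" using c False by auto
        define r where "r = radv c (\<sigma> c)"
        have rV: "r \<in> Vr_of C Fo Fu c (\<sigma> c)" and gd: "Good c r" using radv[OF cCU(1), of "\<sigma> c"] by (auto simp: r_def)
        have rp: "r \<subseteq> C" "r \<noteq> {}" "finite r" using Vr_props[OF rV] by auto
        obtain c' where c': "c' \<in> r" "c' \<in> ys k" using gd c False unfolding Good_def by blast
        have cardr: "card r \<le> card C" using rp finC by (simp add: card_mono)
        have cardr0: "card r > 0" using rp by (simp add: card_gt_0_iff)
        have "\<delta> \<le> 1 / real (card r)" unfolding \<delta>_def using cardr cardr0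
          by (simp add: frac_le)
        have B1: "GV0 c \<in> Bg" "GV1 c (\<sigma> c) \<in> Bg" "GVr r \<in> Bg" using cCU by (auto simp: Bg_def)
        define R0 :: "('a, 'u) gvtx set" where "R0 = GV0 ` r"
        have fin0: "finite R0" "R0 \<noteq> {}" using rp by (auto simp: R0_def)
        define a0 :: "('a, 'u) gvtx" where "a0 = GV0 c'"
        have eq: "pcG (Suc (Suc (Suc m))) (GV0 c) = (\<integral>\<^sup>+y. pcG m y \<partial>measure_pmf (pmf_of_set R0))"
          using B1 by (simp add: pcG_Suc gs_def r_def R0_def)
        have ge: "(\<integral>\<^sup>+y. pcG m a0 * indicator {a0} y \<partial>measure_pmf (pmf_of_set R0))
            \<le> (\<integral>\<^sup>+y. pcG m y \<partial>measure_pmf (pmf_of_set R0))"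
          by (rule nn_integral_mono) (simp add: indicator_def)
        have ci: "(\<integral>\<^sup>+y. pcG m a0 * indicator {a0} y \<partial>measure_pmf (pmf_of_set R0))
            = pcG m a0 * emeasure (measure_pmf (pmf_of_set R0)) {a0}"
          by (rule nn_integral_cmult_indicator) simp
        have "pcG m a0 * emeasure (measure_pmf (pmf_of_set R0)) {a0} \<le> pcG (Suc (Suc (Suc m))) (GV0 c)"
          using eq ge ci by simp
        moreover have "emeasure (measure_pmf (pmf_of_set R0)) {a0} = ennreal (1 / real (card r))"
          using fin0 c'(1) by (simp add: emeasure_pmf_single card_image inj_on_def R0_def a0_def)
        ultimately have "pcG m (GV0 c') * ennreal (1 / real (card r)) \<le> pcG m (GV0 c)"
          unfolding a0_def using pcG_mono[of m "Suc (Suc (Suc m))" "GV0 c"] by (auto intro: order_trans)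
        moreover have "ennreal (\<delta>^k) * ennreal (1 / real (card r)) \<le> pcG m (GV0 c') * ennreal (1 / real (card r))"
          using Suc.IH c'(2) by (intro mult_right_mono) auto
        moreover have "ennreal (\<delta>^Suc k) \<le> ennreal (\<delta>^k) * ennreal (1 / real (card r))"
        proof -
          have "\<delta>^Suc k \<le> \<delta>^k * (1 / real (card r))"
          proof -
            have "\<delta>^k * \<delta> \<le> \<delta>^k * (1 / real (card r))"
              using \<open>\<delta> \<le> 1 / real (card r)\<close> \<delta> by (intro mult_left_mono) auto
            then show ?thesis by (simp add: mult.commute)
          qed
          then show ?thesis using \<delta> by (simp add: ennreal_mult[symmetric])
        qed
        ultimately show ?thesis by (meson order_trans)
      qed
    qed
  qed
  obtain k0 where k0: "v \<in> ys k0" using vY unfolding Y_def by blast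
  have big: "ennreal (\<delta>^k0) \<le> path_cyl Kg (GV0 v) (replicate m (- (GV0 ` U)))" for m
  proof (cases m)
    case 0 then show ?thesis using \<delta> by (simp add: power_le_one)
  next
    case (Suc m') then show ?thesis using lower[of k0] k0 unfolding pcG_def Bg_def by blast
  qed
  have "emeasure P {\<omega> \<in> space P. \<exists>i. \<omega> !! i \<in> GV0 ` U} \<noteq> 1"
    by (rule reach_not_one[OF PM[folded Kg_def] _ _ _ big]) (use \<delta> in auto)
  then show ?thesis using adv_strategy GM by blast
qed

end


theorem proposition2:
  fixes T :: "'a::polish_space \<Rightarrow> 'u::finite \<Rightarrow> 'a measure"
    and Bs C :: "'a set set"
    and Fo Fu :: "'a set \<Rightarrow> 'u \<Rightarrow> 'a set set"
    and v :: "'a set" and U :: "'a set set"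
    and \<sigma> :: "'a set \<Rightarrow> 'u"
  assumes "is_cmp T"
    and "measurable_partition Bs"
    and "is_abstraction Bs C"
    and "F_over_ok T C Fo"
    and "F_under_ok T C Fu"
    and "v \<in> C" and "U \<subseteq> C"
    and win: "\<forall>\<pi>1 P. p1_strategy C Fo Fu \<pi>1 \<longrightarrow> game_measure \<sigma> \<pi>1 v P \<longrightarrow>
               emeasure P {\<omega> \<in> space P. \<exists>i. \<omega> !! i \<in> GV0 ` U} = 1"
  shows "\<forall>s\<in>v. \<forall>P. cmp_path_measure T (refinement C \<sigma>) s P \<longrightarrow>
           emeasure P {\<omega> \<in> space P. \<exists>i. \<omega> !! i \<in> Qinv U} = 1"
proof -
  interpret prop2 T Bs C Fo Fu v U \<sigma>
    by (rule prop2.intro) (use assms in blast)+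
  show ?thesis
  proof (cases "v \<in> Y")
    case True
    then obtain \<pi>1 P where "p1_strategy C Fo Fu \<pi>1" "game_measure \<sigma> \<pi>1 v P"
      "emeasure P {\<omega> \<in> space P. \<exists>i. \<omega> !! i \<in> GV0 ` U} \<noteq> 1"
      using game_part by blast
    then show ?thesis using win by blast
  next
    case False
    then show ?thesis by (rule cmp_part)
  qed
qed

end
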